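(* Let $H_p>0$ and let $\gamma_g:\mathbb{R}\to\mathbb{R}$ be an even, $H_p$-periodic, strictly positive function that is integrable over a period. Let $n$ be an even integer. Consider the array of $n+1$ junctions indexed by $i\in\{-n/2,\dots,n/2\}$, with positions $a_i = 2\pi i/H_p$ and strengths $$d_{-i}=d_i=\frac{1}{H_p}\int_0^{H_p}\gamma_g(H)\cos(Ha_i)\,dH,\qquad i\in\{0,\dots,n/2\}.$$ Then the maximal current of this array in the magnetic approximation is $$\gamma_{max}(H)=\Big|d_0+2\sum_{i=1}^{n/2} d_i\cos(Ha_i)\Big|\qquad\text{for all } H\in\mathbb{R},$$ i.e. the absolute value of the truncation (keeping the harmonics $\cos(2\pi iH/H_p)$, $0\le i\le n/2$) of the cosine Fourier series of $\gamma_g$.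
   Context: An array of Josephson junctions (in the magnetic approximation) is described by finitely many real positions $a_1<\dots<a_m$ and real strengths $d_1,\dots,d_m$ (a negative $d_i$ corresponds to a so-called $\pi$-junction). For an applied magnetic field $H\in\mathbb{R}$, the maximal current of the array in the magnetic approximation is $$\gamma_{max}(H)=\max_{c\in\mathbb{R}}\Big|\sum_{i=1}^m d_i\sin(Ha_i+c)\Big|,$$ and $c_{max}(H)$ denotes a value of $c$ at which this maximum is attained. *)

theory Defs
  imports "HOL-Analysis.Analysis"
begin

text \<open>Array of Josephson junctions: finite index set I, positions a, strengths d.
  Maximal current in the magnetic approximation.\<close>
definition gamma_max :: "'i set \<Rightarrow> ('i \<Rightarrow> real) \<Rightarrow> ('i \<Rightarrow> real) \<Rightarrow> real \<Rightarrow> real" where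
  "gamma_max I a d H = (SUP c::real. \<bar>\<Sum>i\<in>I. d i * sin (H * a i + c)\<bar>)"

end

theory Submission
  imports Defs
begin

lemma sym_sum:
  fixes g :: "int \<Rightarrow> real" and m :: int
  assumes "m \<ge> 0"
  shows "(\<Sum>i\<in>{-m..m}. g i) = g 0 + (\<Sum>i\<in>{1..m}. g i + g (-i))"
proof -
  have e1: "{-m..m} = {-m..-1} \<union> insert 0 {1..m}" using assms by auto
  have e2: "{-m..-1} = uminus ` {1..m}"
    by (auto simp: image_iff intro!: bexI[where x="- _"])
  have "(\<Sum>i\<in>{-m..m}. g i) = (\<Sum>i\<in>{-m..-1}. g i) + (\<Sum>i\<in>insert 0 {1..m}. g i)"
    unfolding e1 by (rule sum.union_disjoint) auto
  also have "(\<Sum>i\<in>{-m..-1}. g i) = (\<Sum>i\<in>{1..m}. g (-i))"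
    unfolding e2 by (subst sum.reindex) (auto simp: inj_on_def)
  also have "(\<Sum>i\<in>insert 0 {1..m}. g i) = g 0 + (\<Sum>i\<in>{1..m}. g i)" by simp
  finally show ?thesis by (simp add: sum.distrib)
qed

theorem mainTheorem1:
  fixes Hp :: real and gamma_g :: "real \<Rightarrow> real" and n :: int
    and a d :: "int \<Rightarrow> real"
  assumes Hp_pos: "Hp > 0"
    and even_g: "\<And>H. gamma_g (- H) = gamma_g H"
    and periodic_g: "\<And>H. gamma_g (H + Hp) = gamma_g H"
    and pos_g: "\<And>H. gamma_g H > 0"
    and int_g: "gamma_g integrable_on {0..Hp}"
    and n_even: "even n" and n_nonneg: "n \<ge> 0"
    and a_def: "\<And>i. a i = 2 * pi * real_of_int i / Hp"
    and d_def: "\<And>i. i \<in> {0..n div 2} \<Longrightarrow>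
                 d i = (1 / Hp) * integral {0..Hp} (\<lambda>H. gamma_g H * cos (H * a i))"
    and d_sym: "\<And>i. i \<in> {0..n div 2} \<Longrightarrow> d (- i) = d i"
  shows "\<forall>H::real. gamma_max {- (n div 2)..n div 2} a d H
           = \<bar>d 0 + 2 * (\<Sum>i\<in>{1..n div 2}. d i * cos (H * a i))\<bar>"
proof
  fix H :: real
  define m where "m = n div 2"
  have m0: "m \<ge> 0" using n_nonneg unfolding m_def by simp
  have aneg: "\<And>i. a (-i) = - a i" using a_def by simp
  define S where "S = d 0 + 2 * (\<Sum>i\<in>{1..m}. d i * cos (H * a i))"
  have T0: "(\<Sum>i\<in>{-m..m}. d i * sin (H * a i)) = 0"
  proof -
    have "(\<Sum>i\<in>{-m..m}. d i * sin (H * a i)) = d 0 * sin (H * a 0) +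
       (\<Sum>i\<in>{1..m}. d i * sin (H * a i) + d (-i) * sin (H * a (-i)))"
      by (rule sym_sum[OF m0])
    also have "\<dots> = 0"
      using d_sym unfolding m_def by (simp add: aneg a_def)
    finally show ?thesis .
  qed
  have Sc: "(\<Sum>i\<in>{-m..m}. d i * cos (H * a i)) = S"
  proof -
    have "(\<Sum>i\<in>{-m..m}. d i * cos (H * a i)) = d 0 * cos (H * a 0) +
       (\<Sum>i\<in>{1..m}. d i * cos (H * a i) + d (-i) * cos (H * a (-i)))"
      by (rule sym_sum[OF m0])
    also have "\<dots> = S"
      unfolding S_def using d_sym unfolding m_def
      by (simp add: aneg a_def sum_distrib_left)
    finally show ?thesis .
  qed
  have key: "\<And>c. (\<Sum>i\<in>{-m..m}. d i * sin (H * a i + c)) = S * sin c"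
  proof -
    fix c
    have "(\<Sum>i\<in>{-m..m}. d i * sin (H * a i + c)) =
      cos c * (\<Sum>i\<in>{-m..m}. d i * sin (H * a i)) + sin c * (\<Sum>i\<in>{-m..m}. d i * cos (H * a i))"
      by (simp add: sin_add sum_distrib_left sum.distrib algebra_simps)
    then show "(\<Sum>i\<in>{-m..m}. d i * sin (H * a i + c)) = S * sin c"
      using T0 Sc by simp
  qed
  have "gamma_max {-m..m} a d H = \<bar>S\<bar>"
    unfolding gamma_max_def key
  proof (rule cSup_eq_maximum)
    show "\<bar>S\<bar> \<in> range (\<lambda>c. \<bar>S * sin c\<bar>)"
      by (rule range_eqI[where x="pi/2"]) simp
    show "\<And>x. x \<in> range (\<lambda>c. \<bar>S * sin c\<bar>) \<Longrightarrow> x \<le> \<bar>S\<bar>"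
      by (auto simp: abs_mult intro!: mult_left_le)
  qed
  then show "gamma_max {- (n div 2)..n div 2} a d H
           = \<bar>d 0 + 2 * (\<Sum>i\<in>{1..n div 2}. d i * cos (H * a i))\<bar>"
    unfolding S_def m_def by simp
qed

end
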